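(* Let $H$ be an abelian group with a non-degenerate alternating $\mathbb{Z}$-bilinear form $\langle-,-\rangle$ (i.e. $\ker\mu=0$). Then there are isomorphisms \[ H_2(\mathbb{Q}[H])\longrightarrow H_2(\mathbb{Q}[H^{(1)}])\longrightarrow \mathbb{Q}\otimes_{\mathbb{Z}}H, \] the first being induced by the projection $\varpi^{(1)}:\mathbb{Q}[H]=\mathbb{Q}[\ker\mu]\oplus\mathbb{Q}[H^{(1)}]\to\mathbb{Q}[H^{(1)}]$.
   Context: $\mu:H\to\mathrm{Hom}_{\mathbb{Z}}(H,\mathbb{Z})$, $\mu(x)(y)=\langle x,y\rangle$; $H^{(1)}:=H\setminus\ker\mu$. $\mathbb{Q}[S]$ ($S\subset H$) is the $\mathbb{Q}$-vector space with basis symbols $[x]$, $x\in S$; $\mathbb{Q}[H]$ is a Lie algebra via $[[x],[y]]=\langle x,y\rangle[x+y]$, $\mathbb{Q}[H^{(1)}]$ is its derived subalgebra (a Lie subalgebra; it is $0$ if $H^{(1)}=\emptyset$) and $\mathbb{Q}[\ker\mu]$ its center, and $\varpi^{(1)}$ is a Lie algebra homomorphism. $H_2$ denotes Lie algebra homology with trivial coefficients $\mathbb{Q}$ (Chevalley–Eilenberg complex). *)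

theory Defs
  imports Complex_Main "HOL-Library.Function_Algebras"
begin

definition supp :: "('x \<Rightarrow> rat) \<Rightarrow> 'x set" where
  "supp g = {x. g x \<noteq> 0}"

definition bvec :: "'x \<Rightarrow> 'x \<Rightarrow> rat" where
  "bvec a = (\<lambda>z. if z = a then 1 else 0)"

text \<open>Q[S]: finitely supported functions with support in S.\<close>
definition QS :: "'x set \<Rightarrow> ('x \<Rightarrow> rat) set" where
  "QS S = {g. finite (supp g) \<and> supp g \<subseteq> S}"

definition H1 :: "('a \<Rightarrow> 'a \<Rightarrow> int) \<Rightarrow> 'a set" where
  "H1 f = {x. \<exists>y. f x y \<noteq> 0}"

text \<open>Chevalley--Eilenberg chains of the Lie algebra Q[S] (basis [x], x in S).
  The exterior square (cube) of Q[S] is modelled in the basis: an element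
  1/2 \<Sum> w(x,y) [x]\<and>[y] (resp. 1/6 \<Sum> u(x,y,z) [x]\<and>[y]\<and>[z]) corresponds to the
  finitely supported alternating coefficient function w (resp. u);
  [x]\<and>[y] corresponds to bvec (x,y) - bvec (y,x).\<close>
definition chains2 :: "'x set \<Rightarrow> ('x \<times> 'x \<Rightarrow> rat) set" where
  "chains2 S = {w. finite (supp w) \<and> supp w \<subseteq> S \<times> S \<and> (\<forall>x y. w (x, y) = - w (y, x))}"

definition chains3 :: "'x set \<Rightarrow> ('x \<times> 'x \<times> 'x \<Rightarrow> rat) set" where
  "chains3 S = {u. finite (supp u) \<and> supp u \<subseteq> S \<times> S \<times> S \<and>
     (\<forall>x y z. u (x, y, z) = - u (y, x, z) \<and> u (x, y, z) = - u (x, z, y))}"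

definition wedge2 :: "'x \<Rightarrow> 'x \<Rightarrow> ('x \<times> 'x \<Rightarrow> rat)" where
  "wedge2 a b = bvec (a, b) - bvec (b, a)"

text \<open>Lie bracket [[x],[y]] = <x,y>[x+y]; CE differentials
  d2([x]\<and>[y]) = -[[x],[y]],
  d3([x]\<and>[y]\<and>[z]) = -[[x],[y]]\<and>[z] + [[x],[z]]\<and>[y] - [[y],[z]]\<and>[x].\<close>
definition d2 :: "('a::ab_group_add \<Rightarrow> 'a \<Rightarrow> int) \<Rightarrow> ('a \<times> 'a \<Rightarrow> rat) \<Rightarrow> ('a \<Rightarrow> rat)" where
  "d2 f w = (\<lambda>c. (1/2) * (\<Sum>p\<in>supp w. w p *
      (- of_int (f (fst p) (snd p)) * bvec (fst p + snd p) c)))"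

definition d3 :: "('a::ab_group_add \<Rightarrow> 'a \<Rightarrow> int) \<Rightarrow> ('a \<times> 'a \<times> 'a \<Rightarrow> rat) \<Rightarrow> ('a \<times> 'a \<Rightarrow> rat)" where
  "d3 f u = (\<lambda>c. (1/6) * (\<Sum>p\<in>supp u. (case p of (x, y, z) \<Rightarrow> u p *
      (- of_int (f x y) * wedge2 (x + y) z c
       + of_int (f x z) * wedge2 (x + z) y c
       - of_int (f y z) * wedge2 (y + z) x c))))"

definition cycles2 :: "('a::ab_group_add \<Rightarrow> 'a \<Rightarrow> int) \<Rightarrow> 'a set \<Rightarrow> ('a \<times> 'a \<Rightarrow> rat) set" where
  "cycles2 f S = {w \<in> chains2 S. d2 f w = 0}"

definition boundaries2 :: "('a::ab_group_add \<Rightarrow> 'a \<Rightarrow> int) \<Rightarrow> 'a set \<Rightarrow> ('a \<times> 'a \<Rightarrow> rat) set" where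
  "boundaries2 f S = d3 f ` chains3 S"

text \<open>Map on exterior squares induced by the projection Q[H] \<rightarrow> Q[S] ([x] \<mapsto> [x] if x \<in> S, else 0).\<close>
definition proj2 :: "'x set \<Rightarrow> ('x \<times> 'x \<Rightarrow> rat) \<Rightarrow> ('x \<times> 'x \<Rightarrow> rat)" where
  "proj2 S w = (\<lambda>p. if p \<in> S \<times> S then w p else 0)"

text \<open>Q \<otimes>_Z H presented as Q[H] modulo the Q-span of [h+h'] - [h] - [h'].\<close>
definition tensor_rel :: "('a::ab_group_add \<Rightarrow> rat) set" where
  "tensor_rel = {g. \<exists>F c. finite F \<and>
     g = (\<Sum>p\<in>F. (\<lambda>z. c p * (bvec (fst p + snd p) z - bvec (fst p) z - bvec (snd p) z)))}"

text \<open>phi induces a Q-linear isomorphism Z/B \<rightarrow> Z'/B'.\<close>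
definition induces_iso :: "(('x \<Rightarrow> rat) \<Rightarrow> ('y \<Rightarrow> rat)) \<Rightarrow> ('x \<Rightarrow> rat) set \<Rightarrow> ('x \<Rightarrow> rat) set
    \<Rightarrow> ('y \<Rightarrow> rat) set \<Rightarrow> ('y \<Rightarrow> rat) set \<Rightarrow> bool" where
  "induces_iso \<phi> Z B Z' B' \<longleftrightarrow>
     (\<forall>x\<in>Z. \<phi> x \<in> Z') \<and> (\<forall>x\<in>B. \<phi> x \<in> B') \<and>
     (\<forall>x\<in>Z. \<forall>y\<in>Z. \<phi> (x + y) = \<phi> x + \<phi> y) \<and>
     (\<forall>x\<in>Z. \<forall>c::rat. \<phi> (\<lambda>t. c * x t) = (\<lambda>t. c * \<phi> x t)) \<and>
     (\<forall>x\<in>Z. \<phi> x \<in> B' \<longrightarrow> x \<in> B) \<and>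
     (\<forall>y\<in>Z'. \<exists>x\<in>Z. y - \<phi> x \<in> B')"

end

theory Submission
  imports Defs
begin

lemma sum_fun_apply: "(\<Sum>p\<in>A. G p) t = (\<Sum>p\<in>A. G p t)"
  by (induct A rule: infinite_finite_induct) auto

definition smul :: "rat \<Rightarrow> ('x \<Rightarrow> rat) \<Rightarrow> ('x \<Rightarrow> rat)" where
  "smul c w = (\<lambda>t. c * w t)"

lemma smul_apply[simp]: "smul c w t = c * w t" by (simp add: smul_def)

definition Ev :: "('a::ab_group_add \<Rightarrow> 'a \<Rightarrow> int) \<Rightarrow> 'a \<times> 'a \<times> 'a \<Rightarrow> ('a \<times> 'a \<Rightarrow> rat)" where
  "Ev f p = (case p of (x, y, z) \<Rightarrow> (\<lambda>c. - of_int (f x y) * wedge2 (x + y) z c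
       + of_int (f x z) * wedge2 (x + z) y c - of_int (f y z) * wedge2 (y + z) x c))"

lemma d3_alt: "d3 f u = (\<lambda>c. (1/6) * (\<Sum>p\<in>supp u. u p * Ev f p c))"
  unfolding d3_def Ev_def by (auto intro!: ext sum.cong split: prod.splits)

lemma d3_sup: assumes "finite A" "supp u \<subseteq> A"
  shows "d3 f u = (\<lambda>c. (1/6) * (\<Sum>p\<in>A. u p * Ev f p c))"
  unfolding d3_alt
  by (rule ext, rule arg_cong[where f="\<lambda>x. (1/6) * x"], rule sum.mono_neutral_left)
     (use assms in \<open>auto simp: supp_def\<close>)

lemma d2_sup: assumes "finite A" "supp w \<subseteq> A"
  shows "d2 f w = (\<lambda>c. (1/2) * (\<Sum>p\<in>A. w p * (- of_int (f (fst p) (snd p)) * bvec (fst p + snd p) c)))"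
  unfolding d2_def
  by (rule ext, rule arg_cong[where f="\<lambda>x. (1/2) * x"], rule sum.mono_neutral_left)
     (use assms in \<open>auto simp: supp_def\<close>)

lemma supp_add: "supp (u + v) \<subseteq> supp u \<union> supp v" by (auto simp: supp_def)
lemma supp_diff: "supp (u - v) \<subseteq> supp u \<union> supp v" by (auto simp: supp_def)
lemma supp_smul: "supp (smul c u) \<subseteq> supp u" by (auto simp: supp_def)
lemma supp_bvec: "supp (bvec p) = {p}" by (auto simp: supp_def bvec_def)

lemma d3_add: assumes "finite (supp u)" "finite (supp v)"
  shows "d3 f (u + v) = d3 f u + d3 f v"
proof -
  let ?A = "supp u \<union> supp v"
  have "finite ?A" using assms by auto
  then show ?thesis
    using d3_sup[of ?A u f] d3_sup[of ?A v f] d3_sup[of ?A "u+v" f] supp_add[of u v]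
    by (auto simp: sum.distrib ring_distribs intro!: ext)
qed

lemma d3_smul: assumes "finite (supp u)"
  shows "d3 f (smul c u) = smul c (d3 f u)"
  using d3_sup[of "supp u" u f] d3_sup[of "supp u" "smul c u" f] supp_smul[of c u] assms
  by (auto simp: sum_distrib_left mult_ac intro!: ext)

lemma d3_bvec: "d3 f (bvec p) = smul (1/6) (Ev f p)"
  unfolding d3_alt supp_bvec by (auto simp: bvec_def intro!: ext)

lemma chains3_add: assumes "u \<in> chains3 S" "v \<in> chains3 S" shows "u + v \<in> chains3 S"
proof -
  have "finite (supp (u+v))" using assms supp_add[of u v] unfolding chains3_def
    by (metis (no_types, lifting) finite_UnI mem_Collect_eq rev_finite_subset)
  moreover have "supp (u+v) \<subseteq> S \<times> S \<times> S" using assms supp_add[of u v] unfolding chains3_def by blast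
  moreover have "\<forall>x y z. (u+v) (x, y, z) = - (u+v) (y, x, z) \<and> (u+v) (x, y, z) = - (u+v) (x, z, y)"
  proof (intro allI)
    fix x y z
    have "u (x, y, z) = - u (y, x, z)" "u (x, y, z) = - u (x, z, y)"
         "v (x, y, z) = - v (y, x, z)" "v (x, y, z) = - v (x, z, y)"
      using assms unfolding chains3_def by blast+
    then show "(u+v) (x, y, z) = - (u+v) (y, x, z) \<and> (u+v) (x, y, z) = - (u+v) (x, z, y)"
      by simp
  qed
  ultimately show ?thesis unfolding chains3_def by blast
qed

lemma chains3_smul: assumes "u \<in> chains3 S" shows "smul c u \<in> chains3 S"
proof -
  have "finite (supp (smul c u))" using assms supp_smul[of c u] unfolding chains3_def
    by (metis (no_types, lifting) mem_Collect_eq rev_finite_subset)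
  moreover have "supp (smul c u) \<subseteq> S \<times> S \<times> S" using assms supp_smul[of c u] unfolding chains3_def by blast
  moreover have "\<forall>x y z. (smul c u) (x, y, z) = - (smul c u) (y, x, z) \<and> (smul c u) (x, y, z) = - (smul c u) (x, z, y)"
  proof (intro allI)
    fix x y z
    have "u (x, y, z) = - u (y, x, z)" "u (x, y, z) = - u (x, z, y)"
      using assms unfolding chains3_def by blast+
    then show "(smul c u) (x, y, z) = - (smul c u) (y, x, z) \<and> (smul c u) (x, y, z) = - (smul c u) (x, z, y)"
      by simp
  qed
  ultimately show ?thesis unfolding chains3_def by blast
qed

lemma chains3_zero: "0 \<in> chains3 S"
  unfolding chains3_def by (auto simp: supp_def)

lemma B_zero: "0 \<in> boundaries2 f S"
proof -
  have "d3 f 0 = 0" unfolding d3_def by (auto simp: supp_def)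
  then show ?thesis unfolding boundaries2_def using chains3_zero by force
qed

lemma B_add: assumes "x \<in> boundaries2 f S" "y \<in> boundaries2 f S" shows "x + y \<in> boundaries2 f S"
proof -
  obtain u v where u: "u \<in> chains3 S" "x = d3 f u" and v: "v \<in> chains3 S" "y = d3 f v"
    using assms unfolding boundaries2_def by auto
  have "finite (supp u)" "finite (supp v)" using u(1) v(1) unfolding chains3_def by blast+
  then have "x + y = d3 f (u + v)" using u(2) v(2) by (simp add: d3_add)
  then show ?thesis unfolding boundaries2_def using chains3_add[OF u(1) v(1)] by blast
qed

lemma B_smul: assumes "x \<in> boundaries2 f S" shows "smul c x \<in> boundaries2 f S"
proof -
  obtain u where u: "u \<in> chains3 S" "x = d3 f u"
    using assms unfolding boundaries2_def by auto
  have "finite (supp u)" using u(1) unfolding chains3_def by blast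
  then have "smul c x = d3 f (smul c u)" using u(2) by (simp add: d3_smul)
  then show ?thesis unfolding boundaries2_def using chains3_smul[OF u(1)] by blast
qed

lemma smul_minus1: "smul (-1) x = - x" by (auto simp: smul_def)

lemma B_uminus: "x \<in> boundaries2 f S \<Longrightarrow> - x \<in> boundaries2 f S"
  using B_smul[of x f S "-1"] by (simp add: smul_minus1)

lemma B_diff: "x \<in> boundaries2 f S \<Longrightarrow> y \<in> boundaries2 f S \<Longrightarrow> x - y \<in> boundaries2 f S"
  using B_add[of x f S "-y"] B_uminus[of y f S] by simp

lemma B_sum: "finite F \<Longrightarrow> (\<And>p. p \<in> F \<Longrightarrow> G p \<in> boundaries2 f S) \<Longrightarrow> sum G F \<in> boundaries2 f S"
  by (induct F rule: finite_induct) (auto intro: B_zero B_add)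

lemma B_mono: "S \<subseteq> T \<Longrightarrow> boundaries2 f S \<subseteq> boundaries2 f T"
  unfolding boundaries2_def chains3_def by blast

lemma wedge2_swap: "wedge2 b a = - wedge2 a b"
  by (auto simp: wedge2_def)

lemma wedge2_same[simp]: "wedge2 a a = 0"
  by (auto simp: wedge2_def)

locale af =
  fixes f :: "'a::ab_group_add \<Rightarrow> 'a \<Rightarrow> int"
  assumes bl: "f (x + y) z = f x z + f y z"
    and br: "f x (y + z) = f x y + f x z"
    and al: "f x x = 0"
    and nd: "(\<forall>y. f x y = 0) \<Longrightarrow> x = 0"
begin

lemma f0l[simp]: "f 0 y = 0" using bl[of 0 0 y] by simp
lemma f0r[simp]: "f x 0 = 0" using br[of x 0 0] by simp
lemma fnl[simp]: "f (- x) y = - f x y" using bl[of x "-x" y] by simp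
lemma fnr[simp]: "f x (- y) = - f x y" using br[of x y "-y"] by simp
lemma fdl[simp]: "f (x - y) z = f x z - f y z" using bl[of x "-y" z] by simp
lemma fdr[simp]: "f x (y - z) = f x y - f x z" using br[of x y "-z"] by simp
lemma fanti: "f y x = - f x y"
  using al[of "x+y"] bl[of x y "x+y"] br[of x x y] br[of y x y] al[of x] al[of y] by simp
lemma fal[simp]: "f x x = 0" by (rule al)
declare bl[simp] br[simp]

lemma ex_nz: "x \<noteq> 0 \<Longrightarrow> \<exists>y. f y x \<noteq> 0"
proof -
  assume "x \<noteq> 0"
  then obtain y where "f x y \<noteq> 0" using nd[of x] by blast
  then have "f y x \<noteq> 0" using fanti[of x y] by simp
  then show ?thesis by blast
qed

lemma H1_eq: "H1 f = {x. x \<noteq> 0}"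
  unfolding H1_def using nd by force

lemma Ev_swap12: "Ev f (b, a, c) = - Ev f (a, b, c)"
  unfolding Ev_def by (simp add: fun_eq_iff add.commute[of b a] fanti[of a b] algebra_simps)

lemma Ev_swap23: "Ev f (a, c, b) = - Ev f (a, b, c)"
  unfolding Ev_def by (simp add: fun_eq_iff add.commute[of c b] fanti[of b c] algebra_simps)

definition alt3 :: "('a \<times> 'a \<times> 'a \<Rightarrow> rat) \<Rightarrow> ('a \<times> 'a \<times> 'a \<Rightarrow> rat)" where
  "alt3 u = (\<lambda>(x,y,z). u (x,y,z) - u (y,x,z) - u (x,z,y) - u (z,y,x) + u (y,z,x) + u (z,x,y))"

lemma alt3_alt: "alt3 u (x,y,z) = - alt3 u (y,x,z)" "alt3 u (x,y,z) = - alt3 u (x,z,y)"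
  unfolding alt3_def by simp_all

lemma bvec3_perm:
  "bvec (a,b,c) (y,x,z) = bvec (b,a,c) (x,y,z)"
  "bvec (a,b,c) (x,z,y) = bvec (a,c,b) (x,y,z)"
  "bvec (a,b,c) (z,y,x) = bvec (c,b,a) (x,y,z)"
  "bvec (a,b,c) (y,z,x) = bvec (c,a,b) (x,y,z)"
  "bvec (a,b,c) (z,x,y) = bvec (b,c,a) (x,y,z)"
  by (auto simp: bvec_def)

lemma Ev_in_B: assumes "a \<in> S" "b \<in> S" "c \<in> S" shows "Ev f (a, b, c) \<in> boundaries2 f S"
proof -
  let ?u = "bvec (a,b,c) - bvec (b,a,c) - bvec (a,c,b) - bvec (c,b,a) + bvec (c,a,b) + bvec (b,c,a)"
  have ueq: "?u = alt3 (bvec (a,b,c))"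
    by (auto simp: fun_eq_iff alt3_def bvec3_perm)
  have fin: "finite (supp (bvec p))" for p :: "'a \<times> 'a \<times> 'a" by (simp add: supp_bvec)
  have finu: "finite (supp (u - v))" "finite (supp (u + v))" if "finite (supp u)" "finite (supp v)"
    for u v :: "'a \<times> 'a \<times> 'a \<Rightarrow> rat"
    using that supp_add[of u v] supp_diff[of u v] by (meson finite_UnI rev_finite_subset)+
  have d3_diff: "d3 f (u - v) = d3 f u - d3 f v" if "finite (supp u)" "finite (supp v)"
    for u v :: "'a \<times> 'a \<times> 'a \<Rightarrow> rat"
  proof -
    have "finite (supp (-v))" using that by (simp add: supp_def)
    then show ?thesis using d3_add[of u "-v" f] that d3_smul[of v f "-1"] by (simp add: smul_minus1)
  qed
  have "d3 f ?u = smul (1/6) (Ev f (a,b,c) - Ev f (b,a,c) - Ev f (a,c,b) - Ev f (c,b,a) + Ev f (c,a,b) + Ev f (b,c,a))"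
    by (simp add: d3_add d3_diff fin finu d3_bvec smul_def fun_eq_iff algebra_simps)
  also have "\<dots> = Ev f (a,b,c)"
  proof -
    have e1: "Ev f (b,a,c) = - Ev f (a,b,c)" by (rule Ev_swap12)
    have e2: "Ev f (b,c,a) = - Ev f (b,a,c)" by (rule Ev_swap23)
    have e3: "Ev f (c,b,a) = - Ev f (b,c,a)" by (rule Ev_swap12)
    have e4: "Ev f (c,a,b) = - Ev f (c,b,a)" by (rule Ev_swap23)
    have e5: "Ev f (a,c,b) = - Ev f (a,b,c)" by (rule Ev_swap23)
    show ?thesis unfolding e5 e4 e3 e2 e1
      by (simp add: smul_def fun_eq_iff algebra_simps)
  qed
  finally have eq: "d3 f ?u = Ev f (a,b,c)" .
  have "?u \<in> chains3 S"
    unfolding chains3_def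
  proof (intro CollectI conjI allI)
    have "supp ?u \<subseteq> {(a,b,c),(b,a,c),(a,c,b),(c,b,a),(b,c,a),(c,a,b)}"
    proof
      fix p assume "p \<in> supp ?u"
      then show "p \<in> {(a,b,c),(b,a,c),(a,c,b),(c,b,a),(b,c,a),(c,a,b)}"
        unfolding supp_def by (cases "p \<in> {(a,b,c),(b,a,c),(a,c,b),(c,b,a),(b,c,a),(c,a,b)}") (auto simp: bvec_def)
    qed
    then show "finite (supp ?u)" by (rule finite_subset) auto
    show "supp ?u \<subseteq> S \<times> S \<times> S" using assms \<open>supp ?u \<subseteq> _\<close> by auto
    fix x y z
    show "?u (x, y, z) = - ?u (y, x, z)" "?u (x, y, z) = - ?u (x, z, y)"
      unfolding ueq by (rule alt3_alt)+
  qed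
  then show ?thesis using eq unfolding boundaries2_def by force
qed

lemma H1_mem[simp]: "x \<in> H1 f \<longleftrightarrow> x \<noteq> 0"
  using H1_eq by auto

end

lemma Ev_wedge: "Ev f (a,b,c) = smul (- of_int (f a b)) (wedge2 (a+b) c) + smul (of_int (f a c)) (wedge2 (a+c) b)
   - smul (of_int (f b c)) (wedge2 (b+c) a)"
  unfolding Ev_def by (simp add: fun_eq_iff)

lemma proj2_add: "proj2 S (u + v) = proj2 S u + proj2 S v"
  and proj2_diff: "proj2 S (u - v) = proj2 S u - proj2 S v"
  and proj2_smul: "proj2 S (smul c u) = smul c (proj2 S u)"
  by (simp_all add: proj2_def fun_eq_iff)

lemma bvec_same[simp]: "bvec p p = 1" by (simp add: bvec_def)
lemma bvec_other: "q \<noteq> p \<Longrightarrow> bvec p q = 0" by (simp add: bvec_def)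
lemma wedge2_nz: "wedge2 a b q \<noteq> 0 \<Longrightarrow> q = (a,b) \<or> q = (b,a)"
  unfolding wedge2_def using bvec_other[of q "(a,b)"] bvec_other[of q "(b,a)"] by force

lemma proj2_wedge: "proj2 S (wedge2 a b) = (if a \<in> S \<and> b \<in> S then wedge2 a b else 0)"
proof (rule ext)
  fix q
  show "proj2 S (wedge2 a b) q = (if a \<in> S \<and> b \<in> S then wedge2 a b else 0) q"
  proof (cases "wedge2 a b q = 0")
    case True then show ?thesis unfolding proj2_def by simp
  next
    case False
    then have "q = (a,b) \<or> q = (b,a)" by (rule wedge2_nz)
    then have "q \<in> S \<times> S \<longleftrightarrow> a \<in> S \<and> b \<in> S" by blast
    then show ?thesis unfolding proj2_def by simp
  qed
qed

lemma smul_zero[simp]: "smul c 0 = 0" "smul 0 u = 0" by (auto simp: smul_def fun_eq_iff)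

lemma sum_smul_apply: "(\<Sum>p\<in>A. smul (c p) (G p)) t = (\<Sum>p\<in>A. c p * G p t)"
  by (simp add: sum_fun_apply)

context af begin

lemma f_neg_self[simp]: "f x (- x) = 0" by simp

lemma proj2_Ev: "proj2 (H1 f) (Ev f (a,b,c)) = (if a \<noteq> 0 \<and> b \<noteq> 0 \<and> c \<noteq> 0 then Ev f (a,b,c) else 0)"
proof -
  have z1: "f a b = 0" if "a + b = 0" using that by (metis add_eq_0_iff f_neg_self)
  have z2: "f a c = 0" if "a + c = 0" using that by (metis add_eq_0_iff f_neg_self)
  have z3: "f b c = 0" if "b + c = 0" using that by (metis add_eq_0_iff f_neg_self)
  show ?thesis
    unfolding Ev_wedge proj2_add proj2_diff proj2_smul proj2_wedge H1_mem
    using z1 z2 z3 by auto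
qed

lemma proj2_B: assumes "x \<in> boundaries2 f UNIV" shows "proj2 (H1 f) x \<in> boundaries2 f (H1 f)"
proof -
  obtain u where u: "x = d3 f u" "finite (supp u)"
    using assms unfolding boundaries2_def chains3_def by blast
  have "proj2 (H1 f) x = (\<Sum>p\<in>supp u. smul (u p / 6) (proj2 (H1 f) (Ev f p)))"
    unfolding u d3_alt
    by (auto simp: fun_eq_iff sum_smul_apply proj2_def sum_distrib_left mult_ac)
  also have "\<dots> \<in> boundaries2 f (H1 f)"
  proof (rule B_sum[OF u(2)])
    fix p :: "'a \<times> 'a \<times> 'a"
    obtain a b c where p: "p = (a,b,c)" by (cases p) auto
    show "smul (u p / 6) (proj2 (H1 f) (Ev f p)) \<in> boundaries2 f (H1 f)"
      unfolding p proj2_Ev using Ev_in_B[of a "H1 f" b c] B_zero B_smul by auto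
  qed
  finally show ?thesis .
qed

end

lemma chains2_fin: "w \<in> chains2 S \<Longrightarrow> finite (supp w)" unfolding chains2_def by blast
lemma chains2_supp: "w \<in> chains2 S \<Longrightarrow> supp w \<subseteq> S \<times> S" unfolding chains2_def by blast
lemma chains2_alt: "w \<in> chains2 S \<Longrightarrow> w (x, y) = - w (y, x)" unfolding chains2_def by blast
lemma chains2_diag: "w \<in> chains2 S \<Longrightarrow> w (x, x) = 0" using chains2_alt[of w S x x] by simp
lemma chains2_out: "w \<in> chains2 S \<Longrightarrow> p \<notin> S \<times> S \<Longrightarrow> w p = 0"
  using chains2_supp[of w S] unfolding supp_def by blast

lemma chains2_I: "finite (supp w) \<Longrightarrow> supp w \<subseteq> S \<times> S \<Longrightarrow> (\<And>x y. w (x, y) = - w (y, x)) \<Longrightarrow> w \<in> chains2 S"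
  unfolding chains2_def by blast

lemma sum_bvec: "finite X \<Longrightarrow> (\<Sum>x\<in>X. c x * bvec x t) = (if t \<in> X then c t else 0)"
proof -
  assume "finite X"
  have "(\<Sum>x\<in>X. c x * bvec x t) = (\<Sum>x\<in>X. if x = t then c x else 0)"
    by (rule sum.cong) (auto simp: bvec_def)
  also have "\<dots> = (if t \<in> X then c t else 0)" using \<open>finite X\<close> by (simp add: sum.delta')
  finally show ?thesis .
qed

lemma bvec_pair0: "bvec (0, x) (q1, q2) = (if q1 = 0 then bvec x q2 else 0)"
  "bvec (x, 0) (q1, q2) = (if q2 = 0 then bvec x q1 else 0)"
  by (auto simp: bvec_def)

context af begin

lemma wedge0_B: "wedge2 0 x \<in> boundaries2 f UNIV"
proof (cases "x = 0")
  case True then show ?thesis using B_zero by simp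
next
  case False
  then obtain y where y: "f y x \<noteq> 0" using ex_nz by blast
  have "Ev f (0, y, x - y) = smul (of_int (f y x)) (wedge2 0 x)"
    unfolding Ev_wedge by (simp add: wedge2_swap[of x 0] fun_eq_iff)
  then have "wedge2 0 x = smul (1 / of_int (f y x)) (Ev f (0, y, x - y))"
    using y by (simp add: fun_eq_iff)
  then show ?thesis using Ev_in_B[of 0 UNIV y "x-y"] B_smul by auto
qed

lemma d2_proj2: assumes "w \<in> chains2 UNIV" shows "d2 f (proj2 (H1 f) w) = d2 f w"
proof -
  have fin: "finite (supp w)" using assms by (rule chains2_fin)
  have sub: "supp (proj2 (H1 f) w) \<subseteq> supp w" by (auto simp: supp_def proj2_def)
  show ?thesis
    unfolding d2_sup[OF fin sub] d2_sup[OF fin order.refl]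
    by (rule ext, rule arg_cong[where f="\<lambda>x. (1/2) * x"], rule sum.cong)
       (auto simp: proj2_def mem_Times_iff)
qed

lemma proj2_chains: assumes "w \<in> chains2 T" shows "proj2 (H1 f) w \<in> chains2 (H1 f)"
proof (rule chains2_I)
  have sub: "supp (proj2 (H1 f) w) \<subseteq> supp w" by (auto simp: supp_def proj2_def)
  then show "finite (supp (proj2 (H1 f) w))" using chains2_fin[OF assms] by (rule finite_subset)
  show "supp (proj2 (H1 f) w) \<subseteq> H1 f \<times> H1 f" by (auto simp: supp_def proj2_def)
  fix x y
  show "proj2 (H1 f) w (x, y) = - proj2 (H1 f) w (y, x)"
    unfolding proj2_def using chains2_alt[OF assms, of x y] by auto
qed

lemma part1_cyc: "w \<in> cycles2 f UNIV \<Longrightarrow> proj2 (H1 f) w \<in> cycles2 f (H1 f)"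
  unfolding cycles2_def using proj2_chains d2_proj2 by auto

lemma part1_inj: assumes w: "w \<in> cycles2 f UNIV" and pw: "proj2 (H1 f) w \<in> boundaries2 f (H1 f)"
  shows "w \<in> boundaries2 f UNIV"
proof -
  have wc: "w \<in> chains2 UNIV" using w unfolding cycles2_def by blast
  let ?X = "Pair 0 -` supp w"
  have finX: "finite ?X" using chains2_fin[OF wc] by (rule finite_vimageI) (simp add: inj_on_def)
  let ?r = "\<Sum>x\<in>?X. smul (w (0, x)) (wedge2 0 x)"
  have req: "w - proj2 (H1 f) w = ?r"
  proof (rule ext)
    fix q :: "'a \<times> 'a"
    obtain q1 q2 where q: "q = (q1, q2)" by (cases q) auto
    have s1: "(\<Sum>x\<in>?X. w (0, x) * bvec (0, x) (q1,q2)) = (if q1 = 0 then w (0, q2) else 0)"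
      unfolding bvec_pair0 using sum_bvec[OF finX, of "\<lambda>x. w (0,x)" q2]
      by (auto simp: supp_def)
    have s2: "(\<Sum>x\<in>?X. w (0, x) * bvec (x, 0) (q1,q2)) = (if q2 = 0 then w (0, q1) else 0)"
      unfolding bvec_pair0 using sum_bvec[OF finX, of "\<lambda>x. w (0,x)" q1]
      by (auto simp: supp_def)
    have "?r (q1,q2) = (\<Sum>x\<in>?X. w (0, x) * bvec (0, x) (q1,q2)) - (\<Sum>x\<in>?X. w (0, x) * bvec (x, 0) (q1,q2))"
      by (simp add: sum_fun_apply wedge2_def algebra_simps sum_subtractf)
    also have "\<dots> = (w - proj2 (H1 f) w) (q1,q2)"
      unfolding s1 s2 proj2_def
      using chains2_alt[OF wc, of q1 0] chains2_diag[OF wc, of 0]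
      by auto
    finally show "(w - proj2 (H1 f) w) q = ?r q" unfolding q by simp
  qed
  have "?r \<in> boundaries2 f UNIV"
    by (rule B_sum[OF finX]) (rule B_smul, rule wedge0_B)
  moreover have "proj2 (H1 f) w \<in> boundaries2 f UNIV" using pw B_mono[of "H1 f" UNIV f] by blast
  ultimately have "proj2 (H1 f) w + ?r \<in> boundaries2 f UNIV" by (rule B_add[rotated])
  moreover have "proj2 (H1 f) w + ?r = w" using req by (simp add: algebra_simps)
  ultimately show ?thesis by simp
qed

lemma part1_surj: assumes y: "y \<in> cycles2 f (H1 f)"
  shows "y \<in> cycles2 f UNIV" "proj2 (H1 f) y = y"
proof -
  have yc: "y \<in> chains2 (H1 f)" using y unfolding cycles2_def by blast
  show "proj2 (H1 f) y = y"
    unfolding proj2_def using chains2_out[OF yc] by (auto simp: fun_eq_iff)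
  have "y \<in> chains2 UNIV"
    by (rule chains2_I[OF chains2_fin[OF yc]], simp, rule chains2_alt[OF yc])
  then show "y \<in> cycles2 f UNIV" using y unfolding cycles2_def by blast
qed

lemma part1: "induces_iso (proj2 (H1 f)) (cycles2 f UNIV) (boundaries2 f UNIV)
           (cycles2 f (H1 f)) (boundaries2 f (H1 f))"
  unfolding induces_iso_def
proof (intro conjI ballI allI impI)
  fix x assume "x \<in> cycles2 f UNIV"
  then show "proj2 (H1 f) x \<in> cycles2 f (H1 f)" by (rule part1_cyc)
next
  fix x assume "x \<in> boundaries2 f UNIV"
  then show "proj2 (H1 f) x \<in> boundaries2 f (H1 f)" by (rule proj2_B)
next
  fix x y :: "'a \<times> 'a \<Rightarrow> rat"
  show "proj2 (H1 f) (x + y) = proj2 (H1 f) x + proj2 (H1 f) y" by (rule proj2_add)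
next
  fix x :: "'a \<times> 'a \<Rightarrow> rat" and c :: rat
  show "proj2 (H1 f) (\<lambda>t. c * x t) = (\<lambda>t. c * proj2 (H1 f) x t)" by (auto simp: proj2_def)
next
  fix x assume "x \<in> cycles2 f UNIV" "proj2 (H1 f) x \<in> boundaries2 f (H1 f)"
  then show "x \<in> boundaries2 f UNIV" by (rule part1_inj)
next
  fix y assume y: "y \<in> cycles2 f (H1 f)"
  show "\<exists>x\<in>cycles2 f UNIV. y - proj2 (H1 f) x \<in> boundaries2 f (H1 f)"
    using part1_surj[OF y] B_zero by force
qed

end


definition rel :: "'a::ab_group_add \<times> 'a \<Rightarrow> ('a \<Rightarrow> rat)" where
  "rel p = bvec (fst p + snd p) - bvec (fst p) - bvec (snd p)"

lemma TR_iff: "g \<in> tensor_rel \<longleftrightarrow> (\<exists>F c. finite F \<and> g = (\<Sum>p\<in>F. smul (c p) (rel p)))"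
proof -
  have eq: "(\<lambda>z. c p * (bvec (fst p + snd p) z - bvec (fst p) z - bvec (snd p) z)) = smul (c p) (rel p)"
    for c :: "'a \<times> 'a \<Rightarrow> rat" and p by (auto simp: rel_def fun_eq_iff)
  show ?thesis unfolding tensor_rel_def by (simp only: eq mem_Collect_eq)
qed

lemma TR_rel: "smul c (rel p) \<in> tensor_rel"
  unfolding TR_iff by (rule exI[of _ "{p}"], rule exI[of _ "\<lambda>_. c"]) simp

lemma TR_zero: "0 \<in> tensor_rel"
  unfolding TR_iff by (rule exI[of _ "{}"]) simp

lemma TR_add: assumes "g1 \<in> tensor_rel" "g2 \<in> tensor_rel" shows "g1 + g2 \<in> tensor_rel"
proof -
  obtain F1 c1 where 1: "finite F1" "g1 = (\<Sum>p\<in>F1. smul (c1 p) (rel p))" using assms(1) unfolding TR_iff by blast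
  obtain F2 c2 where 2: "finite F2" "g2 = (\<Sum>p\<in>F2. smul (c2 p) (rel p))" using assms(2) unfolding TR_iff by blast
  let ?c = "\<lambda>p. (if p \<in> F1 then c1 p else 0) + (if p \<in> F2 then c2 p else 0)"
  have fin: "finite (F1 \<union> F2)" using 1 2 by simp
  have s1: "(\<Sum>p\<in>F1 \<union> F2. smul (?c p) (rel p)) = (\<Sum>p\<in>F1 \<union> F2. (if p \<in> F1 then smul (c1 p) (rel p) else 0))
      + (\<Sum>p\<in>F1 \<union> F2. (if p \<in> F2 then smul (c2 p) (rel p) else 0))"
    unfolding sum.distrib[symmetric] by (rule sum.cong) (auto simp: smul_def fun_eq_iff distrib_right)
  have a: "(F1 \<union> F2) \<inter> F1 = F1" "(F1 \<union> F2) \<inter> F2 = F2" by auto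
  have s2: "(\<Sum>p\<in>F1 \<union> F2. (if p \<in> F1 then smul (c1 p) (rel p) else 0)) = g1"
    unfolding sum.inter_restrict[OF fin, symmetric] 1 a ..
  have s3: "(\<Sum>p\<in>F1 \<union> F2. (if p \<in> F2 then smul (c2 p) (rel p) else 0)) = g2"
    unfolding sum.inter_restrict[OF fin, symmetric] 2 a ..
  have eq: "g1 + g2 = (\<Sum>p\<in>F1 \<union> F2. smul (?c p) (rel p))" unfolding s1 s2 s3 ..
  show ?thesis unfolding TR_iff
    by (rule exI[where x="F1 \<union> F2"], rule exI[where x="?c"], rule conjI[OF fin eq])
qed
lemma TR_smul: assumes "g \<in> tensor_rel" shows "smul c g \<in> tensor_rel"
proof -
  obtain F c1 where 1: "finite F" "g = (\<Sum>p\<in>F. smul (c1 p) (rel p))" using assms(1) unfolding TR_iff by blast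
  have eq: "smul c g = (\<Sum>p\<in>F. smul (c * c1 p) (rel p))"
    unfolding 1 by (simp add: fun_eq_iff sum_fun_apply sum_distrib_left mult.assoc)
  show ?thesis unfolding TR_iff
    by (rule exI[where x="F"], rule exI[where x="\<lambda>p. c * c1 p"], rule conjI[OF 1(1) eq])
qed

lemma TR_uminus: "g \<in> tensor_rel \<Longrightarrow> - g \<in> tensor_rel"
  using TR_smul[of g "-1"] by (simp add: smul_minus1)

lemma TR_diff: "g1 \<in> tensor_rel \<Longrightarrow> g2 \<in> tensor_rel \<Longrightarrow> g1 - g2 \<in> tensor_rel"
  using TR_add[of g1 "-g2"] TR_uminus[of g2] by simp

lemma TR_sum: "finite F \<Longrightarrow> (\<And>p. p \<in> F \<Longrightarrow> G p \<in> tensor_rel) \<Longrightarrow> sum G F \<in> tensor_rel"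
  by (induct F rule: finite_induct) (auto intro: TR_zero TR_add)

lemma TR_relI: "rel p \<in> tensor_rel" using TR_rel[of 1 p] by (simp add: smul_def)

definition phi :: "('a::ab_group_add \<times> 'a \<Rightarrow> rat) \<Rightarrow> ('a \<Rightarrow> rat)" where
  "phi w = (\<lambda>c. w (c, - c))"

definition psi :: "('a::ab_group_add \<Rightarrow> rat) \<Rightarrow> ('a \<times> 'a \<Rightarrow> rat)" where
  "psi g = (\<lambda>q. if fst q + snd q = 0 then (g (fst q) - g (snd q)) / 2 else 0)"

definition ee :: "'a::ab_group_add \<Rightarrow> ('a \<times> 'a \<Rightarrow> rat)" where
  "ee x = wedge2 x (- x)"

lemma ee_zero[simp]: "ee 0 = 0" by (simp add: ee_def)
lemma ee_neg: "ee (- x) = - ee x" by (simp add: ee_def wedge2_swap[of "-x" x])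

lemma bvec_sym: "bvec a b = bvec b a"
proof (cases "a = b")
  case True then show ?thesis by simp
next
  case False
  then have "b \<noteq> a" by blast
  with False show ?thesis by (simp add: bvec_other)
qed

lemma bvec_anti: "bvec (p, q) (c, - c) = (if p + q = 0 then bvec p c else (0::rat))" for p q c :: "'a::ab_group_add"
proof (cases "c = p")
  case True
  show ?thesis
  proof (cases "p + q = 0")
    case pq: True
    then have "q = - p" by (simp add: add_eq_0_iff)
    then show ?thesis using True pq by simp
  next
    case pq: False
    have "(c, - c) \<noteq> (p, q)"
    proof
      assume "(c, - c) = (p, q)"
      then have "- p = q" using True by simp
      then show False using pq by (metis neg_eq_iff_add_eq_0)
    qed
    then show ?thesis using pq by (simp add: bvec_other)
  qed
next
  case False
  then have "(c, - c) \<noteq> (p, q)" by simp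
  then show ?thesis using False by (simp add: bvec_other)
qed

lemma phi_wedge: "phi (wedge2 p q) = (if p + q = 0 then bvec p - bvec q else 0)" for p q :: "'a::ab_group_add"
proof (rule ext)
  fix c
  have qp: "q + p = 0 \<longleftrightarrow> p + q = 0" by (simp add: add.commute)
  have "phi (wedge2 p q) c = bvec (p, q) (c, - c) - bvec (q, p) (c, - c)"
    unfolding phi_def wedge2_def by simp
  also have "\<dots> = (if p + q = 0 then bvec p c - bvec q c else 0)"
    unfolding bvec_anti qp by simp
  also have "\<dots> = (if p + q = 0 then bvec p - bvec q else 0) c" by simp
  finally show "phi (wedge2 p q) c = (if p + q = 0 then bvec p - bvec q else 0) c" .
qed

lemma phi_add: "phi (u + v) = phi u + phi v" and phi_diff: "phi (u - v) = phi u - phi v"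
  and phi_smul: "phi (smul c u) = smul c (phi u)"
  by (simp_all add: phi_def fun_eq_iff)

lemma psi_bvec: "psi (bvec x) = smul (1/2) (ee x)"
proof (rule ext)
  fix q :: "'a \<times> 'a"
  obtain a b where q: "q = (a, b)" by (cases q) auto
  show "psi (bvec x) q = smul (1/2) (ee x) q"
  proof (cases "a + b = 0")
    case True
    then have b: "b = - a" by (metis add.commute eq_neg_iff_add_eq_0)
    have e1: "bvec (x, -x) (a, -a) = bvec x a" using bvec_anti[of x "-x" a] by simp
    have e2: "bvec (-x, x) (a, -a) = bvec x (-a)"
    proof -
      have "(a = -x) = (-a = x)" by auto
      then have "bvec (-x) a = bvec x (-a)" by (simp add: bvec_def)
      then show ?thesis using bvec_anti[of "-x" x a] by simp
    qed
    show ?thesis unfolding q b psi_def ee_def wedge2_def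
      using e1 e2 by (simp add: diff_divide_distrib)
  next
    case False
    have "ee x (a, b) = 0"
    proof (rule ccontr)
      assume "ee x (a, b) \<noteq> 0"
      then have "(a,b) = (x, -x) \<or> (a,b) = (-x, x)" unfolding ee_def by (rule wedge2_nz)
      then show False using False by auto
    qed
    then show ?thesis unfolding q psi_def using False by simp
  qed
qed

lemma psi_add: "psi (u + v) = psi u + psi v" and psi_diff: "psi (u - v) = psi u - psi v"
  and psi_smul: "psi (smul c u) = smul c (psi u)"
  by (simp_all add: psi_def fun_eq_iff add_divide_distrib diff_divide_distrib algebra_simps)

lemma psi_zero: "psi 0 = 0" by (simp add: psi_def fun_eq_iff)

lemma psi_sum: "psi (sum G F) = (\<Sum>p\<in>F. psi (G p))"
proof (induct F rule: infinite_finite_induct)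
  case (infinite A)
  show ?case by (simp only: sum.infinite[OF infinite] psi_zero)
next
  case empty
  show ?case by (simp only: sum.empty psi_zero)
next
  case (insert x F)
  have "psi (sum G (insert x F)) = psi (G x + sum G F)" using insert(1,2) by simp
  also have "\<dots> = psi (G x) + psi (sum G F)" by (rule psi_add)
  also have "\<dots> = psi (G x) + (\<Sum>p\<in>F. psi (G p))" by (simp only: insert(3))
  also have "\<dots> = (\<Sum>p\<in>insert x F. psi (G p))" by (simp only: sum.insert[OF insert(1,2)])
  finally show ?case .
qed


lemma int_choice: "a0 \<noteq> 0 \<Longrightarrow> b0 \<noteq> 0 \<Longrightarrow> c1 \<noteq> 0 \<Longrightarrow>
   \<exists>n\<in>{0,1,2,3}. a0 + n*a1 \<noteq> 0 \<and> b0 + n*b1 \<noteq> 0 \<and> c0 + n*(c1::int) \<noteq> 0"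
  by auto

lemma smul_inv: "k \<noteq> 0 \<Longrightarrow> E = smul k V \<Longrightarrow> V = smul (1 / k) E"
  by (simp add: fun_eq_iff)

lemma smul_neg: "smul c (- V) = smul (- c) V" by (simp add: fun_eq_iff)

lemma smul_negI: assumes "- V = smul c E" shows "V = smul (- c) E"
proof (rule ext)
  fix q
  have "(- V) q = smul c E q" using assms by simp
  then show "V q = smul (- c) E q" by simp
qed

definition bb :: "'a::ab_group_add \<Rightarrow> 'a \<Rightarrow> ('a \<times> 'a \<Rightarrow> rat)" where
  "bb h t = wedge2 t (h - t)"

lemma bb0: "bb 0 t = ee t" by (simp add: bb_def ee_def)

context af begin

lemma three_fun: assumes "f p1 z \<noteq> 0" "f p2 z \<noteq> 0" "f p3 t \<noteq> 0"
  shows "\<exists>z'. f p1 z' \<noteq> 0 \<and> f p2 z' \<noteq> 0 \<and> f p3 z' \<noteq> 0"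
proof -
  obtain n where n: "n \<in> {0,1,2,3::int}" and
    h: "f p1 z + n * f p1 t \<noteq> 0" "f p2 z + n * f p2 t \<noteq> 0" "f p3 z + n * f p3 t \<noteq> 0"
    using int_choice[OF assms] by blast
  from n have "n = 0 \<or> n = 1 \<or> n = 2 \<or> n = 3" by auto
  then show ?thesis
  proof (elim disjE)
    assume "n = 0" then show ?thesis using h by (intro exI[of _ z]) simp
  next
    assume "n = 1" then show ?thesis using h by (intro exI[of _ "z + t"]) simp
  next
    assume "n = 2" then show ?thesis using h by (intro exI[of _ "z + t + t"]) simp
  next
    assume "n = 3" then show ?thesis using h by (intro exI[of _ "z + t + t + t"]) simp
  qed
qed

lemma nd_ex: "x \<noteq> 0 \<Longrightarrow> \<exists>y. f x y \<noteq> 0" using nd by blast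

lemma exists3: assumes "p1 \<noteq> 0" "p2 \<noteq> 0" "p3 \<noteq> 0"
  shows "\<exists>z. f p1 z \<noteq> 0 \<and> f p2 z \<noteq> 0 \<and> f p3 z \<noteq> 0"
proof -
  obtain z1 where z1: "f p1 z1 \<noteq> 0" using nd_ex[OF assms(1)] by blast
  obtain t2 where t2: "f p2 t2 \<noteq> 0" using nd_ex[OF assms(2)] by blast
  obtain t3 where t3: "f p3 t3 \<noteq> 0" using nd_ex[OF assms(3)] by blast
  obtain z2 where z2: "f p1 z2 \<noteq> 0" "f p2 z2 \<noteq> 0"
    using three_fun[OF z1 z1 t2] by blast
  show ?thesis using three_fun[OF z2 t3] by blast
qed

lemma Ev_deg: assumes "x + y + z = h"
  shows "Ev f (x,y,z) = smul (of_int (f y z)) (bb h x) + smul (of_int (f z x)) (bb h y) + smul (of_int (f x y)) (bb h z)"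
proof -
  have 1: "h - z = x + y" "h - y = x + z" "h - x = y + z" using assms by (auto simp: algebra_simps)
  show ?thesis unfolding Ev_wedge bb_def 1
    by (simp add: wedge2_swap[of "x+y" z] wedge2_swap[of "x+z" y] wedge2_swap[of "y+z" x]
        fanti[of z x] fun_eq_iff algebra_simps)
qed

lemma A0: assumes k: "f x y \<noteq> 0" shows "ee (x + y) - ee x - ee y \<in> boundaries2 f (H1 f)"
proof -
  have x: "x \<noteq> 0" using k by auto
  have y: "y \<noteq> 0" using k by auto
  have xy: "x + y \<noteq> 0"
  proof
    assume "x + y = 0"
    then have "y = - x" by (simp add: add_eq_0_iff)
    then show False using k by simp
  qed
  have fyz: "f y (- (x + y)) = f x y" using fanti[of x y] by simp
  have fzx: "f (- (x + y)) x = f x y" using fanti[of x y] by simp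
  have s0: "x + y + - (x + y) = 0" by simp
  have "Ev f (x, y, - (x + y)) = smul (of_int (f x y)) (- (ee (x + y) - ee x - ee y))"
    unfolding Ev_deg[OF s0] bb0 fyz fzx ee_neg
    by (simp add: fun_eq_iff algebra_simps)
  from smul_inv[OF _ this] k
  have "- (ee (x + y) - ee x - ee y) = smul (1 / of_int (f x y)) (Ev f (x, y, - (x + y)))" by simp
  then have "ee (x + y) - ee x - ee y = smul (- (1 / of_int (f x y))) (Ev f (x, y, - (x + y)))"
    by (rule smul_negI)
  moreover have "Ev f (x, y, - (x + y)) \<in> boundaries2 f (H1 f)"
    using x y xy by (intro Ev_in_B) auto
  ultimately show ?thesis using B_smul by simp
qed

lemma lemA: "ee (x + y) - ee x - ee y \<in> boundaries2 f (H1 f)"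
proof -
  consider "x = 0" | "y = 0" | "x + y = 0" | "f x y \<noteq> 0" | "x \<noteq> 0" "y \<noteq> 0" "x + y \<noteq> 0" "f x y = 0"
    by blast
  then show ?thesis
  proof cases
    case 1 then show ?thesis using B_zero by simp
  next
    case 2 then show ?thesis using B_zero by simp
  next
    case 3
    then have "y = - x" by (simp add: add_eq_0_iff)
    then show ?thesis using B_zero by (simp add: ee_neg)
  next
    case 4 then show ?thesis by (rule A0)
  next
    case 5
    obtain z where z: "f x z \<noteq> 0" "f y z \<noteq> 0" "f (x + y) z \<noteq> 0"
      using exists3[OF 5(1,2,3)] by blast
    have a1: "ee (x + y + z) - ee (x + y) - ee z \<in> boundaries2 f (H1 f)" using A0[OF z(3)] .
    have "f x (y + z) \<noteq> 0" using z(1) 5(4) by simp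
    then have a2: "ee (x + (y + z)) - ee x - ee (y + z) \<in> boundaries2 f (H1 f)" by (rule A0)
    have a3: "ee (y + z) - ee y - ee z \<in> boundaries2 f (H1 f)" using A0[OF z(2)] .
    have "ee (x + y) - ee x - ee y = (ee (x + (y + z)) - ee x - ee (y + z)) + (ee (y + z) - ee y - ee z)
            - (ee (x + y + z) - ee (x + y) - ee z)"
      by (simp add: add.assoc algebra_simps)
    then show ?thesis using a1 a2 a3 B_add B_diff by metis
  qed
qed


lemma psi_rel: "psi (rel p) = smul (1/2) (ee (fst p + snd p) - ee (fst p) - ee (snd p))"
  unfolding rel_def psi_diff psi_bvec by (simp add: fun_eq_iff algebra_simps)

lemma psi_TR: assumes "g \<in> tensor_rel" shows "psi g \<in> boundaries2 f (H1 f)"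
proof -
  obtain F c where F: "finite F" "g = (\<Sum>p\<in>F. smul (c p) (rel p))" using assms unfolding TR_iff by blast
  have "psi g = (\<Sum>p\<in>F. smul (c p) (psi (rel p)))" unfolding F psi_sum psi_smul ..
  also have "\<dots> \<in> boundaries2 f (H1 f)"
    by (rule B_sum[OF F(1)], rule B_smul, unfold psi_rel, rule B_smul, rule lemA)
  finally show ?thesis .
qed

lemma phi_Ev_TR: "phi (Ev f (a, b, c)) \<in> tensor_rel"
proof (cases "a + b + c = 0")
  case False
  have "a + b + c \<noteq> 0" "a + c + b \<noteq> 0" "b + c + a \<noteq> 0" using False by (simp_all add: algebra_simps)
  then have "phi (Ev f (a, b, c)) = 0"
    unfolding Ev_wedge phi_add phi_diff phi_smul phi_wedge by simp
  then show ?thesis using TR_zero by simp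
next
  case True
  have c: "c = - (a + b)" using True by (metis add_eq_0_iff add.commute)
  have hab: "a + b = - c" "a + c = - b" "b + c = - a" using True by (simp_all add: c algebra_simps)
  have fac: "f a c = - f a b" by (simp add: c)
  have fbc: "f b c = f a b" using fanti[of a b] by (simp add: c)
  let ?X = "(bvec (-a) - bvec a) + (bvec (-b) - bvec b) + (bvec (-c) - bvec c)"
  have E: "phi (Ev f (a, b, c)) = smul (- of_int (f a b)) ?X"
    unfolding Ev_wedge phi_add phi_diff phi_smul phi_wedge hab fac fbc
    by (simp add: fun_eq_iff algebra_simps)
  have rc: "rel (a + b, c) = bvec 0 - bvec (- c) - bvec c" unfolding rel_def using True by (simp add: hab)
  have X: "?X = smul 2 (rel (a, b)) + smul 2 (rel (a + b, c)) - rel (0, 0) - rel (a, - a) - rel (b, - b) - rel (c, - c)"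
    unfolding rc by (simp add: rel_def hab fun_eq_iff algebra_simps)
  have "?X \<in> tensor_rel" unfolding X
    by (intro TR_add TR_diff TR_rel TR_relI)
  then show ?thesis unfolding E by (rule TR_smul)
qed

lemma phi_B: assumes "x \<in> boundaries2 f (H1 f)" shows "phi x \<in> tensor_rel"
proof -
  obtain u where u: "x = d3 f u" "finite (supp u)"
    using assms unfolding boundaries2_def chains3_def by blast
  have "phi x = (\<Sum>p\<in>supp u. smul (u p / 6) (phi (Ev f p)))"
    unfolding u d3_alt by (simp add: fun_eq_iff phi_def sum_fun_apply sum_distrib_left mult_ac)
  also have "\<dots> \<in> tensor_rel"
  proof (rule TR_sum[OF u(2)])
    fix p :: "'a \<times> 'a \<times> 'a"
    obtain a b c where p: "p = (a,b,c)" by (cases p) auto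
    show "smul (u p / 6) (phi (Ev f p)) \<in> tensor_rel" unfolding p by (rule TR_smul, rule phi_Ev_TR)
  qed
  finally show ?thesis .
qed

lemma phi_QS: assumes "w \<in> chains2 S" shows "phi w \<in> QS UNIV"
proof -
  have "supp (phi w) \<subseteq> fst ` supp w"
  proof
    fix c assume "c \<in> supp (phi w)"
    then have "(c, - c) \<in> supp w" by (simp add: supp_def phi_def)
    then show "c \<in> fst ` supp w" by force
  qed
  then have "finite (supp (phi w))" using chains2_fin[OF assms] by (meson finite_imageI finite_subset)
  then show ?thesis unfolding QS_def by simp
qed

lemma bvec_neg_sym: "bvec (- x) t = bvec x (- t)" for x t :: "'a"
proof -
  have "(t = - x) = (- t = x)" by auto
  then show ?thesis by (simp add: bvec_def)
qed

lemma psi_cyc: assumes g: "g \<in> QS UNIV" shows "psi g \<in> cycles2 f (H1 f)"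
proof -
  have fin: "finite (supp g)" using g unfolding QS_def by blast
  have sub: "supp (psi g) \<subseteq> (\<lambda>a. (a, - a)) ` supp g \<union> (\<lambda>b. (- b, b)) ` supp g"
  proof
    fix q assume q: "q \<in> supp (psi g)"
    obtain a b where qab: "q = (a, b)" by (cases q) auto
    have ab: "a + b = 0" and ne: "g a \<noteq> g b" using q unfolding qab supp_def psi_def by (auto split: if_splits)
    have b: "b = - a" using ab by (simp add: add_eq_0_iff)
    have a: "a = - b" using b by simp
    show "q \<in> (\<lambda>a. (a, - a)) ` supp g \<union> (\<lambda>b. (- b, b)) ` supp g"
    proof (cases "g a = 0")
      case True
      then have "g b \<noteq> 0" using ne by simp
      then show ?thesis unfolding qab supp_def using a by blast
    next
      case False
      then show ?thesis unfolding qab supp_def using b by blast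
    qed
  qed
  have ch: "psi g \<in> chains2 (H1 f)"
  proof (rule chains2_I)
    show "finite (supp (psi g))" using sub fin by (meson finite_UnI finite_imageI finite_subset)
    show "supp (psi g) \<subseteq> H1 f \<times> H1 f"
    proof
      fix q assume q: "q \<in> supp (psi g)"
      obtain a b where qab: "q = (a, b)" by (cases q) auto
      have ab: "a + b = 0" and ne: "g a \<noteq> g b" using q unfolding qab supp_def psi_def by (auto split: if_splits)
      have b: "b = - a" using ab by (simp add: add_eq_0_iff)
      have "a \<noteq> 0" using ne b by auto
      then show "q \<in> H1 f \<times> H1 f" using b qab by simp
    qed
    fix x y :: 'a
    have "y + x = 0 \<longleftrightarrow> x + y = 0" by (simp add: add.commute)
    then show "psi g (x, y) = - psi g (y, x)" unfolding psi_def by (simp add: field_simps)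
  qed
  have "d2 f (psi g) = 0"
    unfolding d2_def
  proof (rule ext)
    fix c
    have "(\<Sum>p\<in>supp (psi g). psi g p * (- of_int (f (fst p) (snd p)) * bvec (fst p + snd p) c)) = 0"
    proof (rule sum.neutral, rule ballI)
      fix p assume p: "p \<in> supp (psi g)"
      then have "fst p + snd p = 0" unfolding supp_def psi_def by (auto split: if_splits)
      then have "snd p = - fst p" by (simp add: add_eq_0_iff)
      then show "psi g p * (- of_int (f (fst p) (snd p)) * bvec (fst p + snd p) c) = 0" by simp
    qed
    then show "(1/2) * (\<Sum>p\<in>supp (psi g). psi g p * (- of_int (f (fst p) (snd p)) * bvec (fst p + snd p) c)) = 0 c"
      by simp
  qed
  then show ?thesis using ch unfolding cycles2_def by blast
qed

lemma psi_surj: fixes g :: "'a \<Rightarrow> rat" assumes g: "g \<in> QS UNIV" shows "g - phi (psi g) \<in> tensor_rel"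
proof -
  have fin: "finite (supp g)" using g unfolding QS_def by blast
  have eq: "g - phi (psi g) = (\<Sum>x\<in>supp g. smul (g x / 2) (bvec x + bvec (- x)))"
  proof (rule ext)
    fix t
    have s1: "(\<Sum>x\<in>supp g. g x / 2 * bvec x t) = g t / 2"
      using sum_bvec[OF fin, of "\<lambda>x. g x / 2" t] by (auto simp: supp_def)
    have s2: "(\<Sum>x\<in>supp g. g x / 2 * bvec x (- t)) = g (- t) / 2"
      using sum_bvec[OF fin, of "\<lambda>x. g x / 2" "- t"] by (auto simp: supp_def)
    have "(\<Sum>x\<in>supp g. smul (g x / 2) (bvec x + bvec (- x))) t
        = (\<Sum>x\<in>supp g. g x / 2 * bvec x t) + (\<Sum>x\<in>supp g. g x / 2 * bvec x (- t))"
      by (simp add: sum_fun_apply bvec_neg_sym distrib_left sum.distrib)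
    also have "\<dots> = (g - phi (psi g)) t" unfolding s1 s2 by (simp add: phi_def psi_def field_simps)
    finally show "(g - phi (psi g)) t = (\<Sum>x\<in>supp g. smul (g x / 2) (bvec x + bvec (- x))) t" by simp
  qed
  have r: "bvec x + bvec (- x) = - rel (x, - x) - rel (0, 0)" for x :: 'a
    by (simp add: rel_def fun_eq_iff)
  show ?thesis unfolding eq r
    by (rule TR_sum[OF fin], rule TR_smul, intro TR_diff TR_uminus TR_relI)
qed

end

definition gg :: "('a::ab_group_add \<Rightarrow> 'a \<Rightarrow> int) \<Rightarrow> 'a \<Rightarrow> 'a \<Rightarrow> rat" where
  "gg f h t = rat_of_int (f t h)"

definition Phi :: "('a::ab_group_add \<Rightarrow> 'a \<Rightarrow> int) \<Rightarrow> 'a \<Rightarrow> 'a \<Rightarrow> 'a \<Rightarrow> ('a \<times> 'a \<Rightarrow> rat)" where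
  "Phi f h v t = smul (gg f h v) (bb h t) - smul (gg f h t) (bb h v)"

lemma smul_uminus: "smul (- c) V = - smul c V" by (simp add: fun_eq_iff)

lemma bb_anti: "bb h (h - t) = - bb h t"
  unfolding bb_def by (simp add: wedge2_swap[of "h - t" t])

lemma Phi_self[simp]: "Phi f h v v = 0" by (simp add: Phi_def fun_eq_iff)

context af begin

lemma gg_anti: "gg f h (h - t) = - gg f h t" by (simp add: gg_def)

lemma Phi_anti: "Phi f h v (h - t) = - Phi f h v t"
  unfolding Phi_def bb_anti gg_anti by (simp add: fun_eq_iff)

lemma gid: assumes "x + y + z = h"
  shows "f y z * f x h + f z x * f y h + f x y * f z h = 0"
proof -
  have "h = x + y + z" using assms by simp
  then show ?thesis by (simp add: fanti[of x z] fanti[of y x] fanti[of z y] algebra_simps)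
qed

lemma RPhi: assumes s: "x + y + z = h" and nz: "x \<noteq> 0" "y \<noteq> 0" "z \<noteq> 0"
  shows "smul (of_int (f y z)) (Phi f h v x) + smul (of_int (f z x)) (Phi f h v y)
       + smul (of_int (f x y)) (Phi f h v z) \<in> boundaries2 f (H1 f)"
proof -
  have G: "of_int (f y z) * gg f h x + of_int (f z x) * gg f h y + of_int (f x y) * gg f h z = (0::rat)"
    using gid[OF s] unfolding gg_def by (metis of_int_0 of_int_add of_int_mult)
  have eq: "smul (of_int (f y z)) (Phi f h v x) + smul (of_int (f z x)) (Phi f h v y)
       + smul (of_int (f x y)) (Phi f h v z) = smul (gg f h v) (Ev f (x, y, z))"
  proof (rule ext)
    fix q
    have "(smul (of_int (f y z)) (Phi f h v x) + smul (of_int (f z x)) (Phi f h v y)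
       + smul (of_int (f x y)) (Phi f h v z)) q
       = gg f h v * Ev f (x, y, z) q
         - (of_int (f y z) * gg f h x + of_int (f z x) * gg f h y + of_int (f x y) * gg f h z) * bb h v q"
      unfolding Ev_deg[OF s] Phi_def by (simp add: algebra_simps)
    then show "(smul (of_int (f y z)) (Phi f h v x) + smul (of_int (f z x)) (Phi f h v y)
       + smul (of_int (f x y)) (Phi f h v z)) q = smul (gg f h v) (Ev f (x, y, z)) q"
      unfolding G by simp
  qed
  show ?thesis unfolding eq using nz by (intro B_smul Ev_in_B) auto
qed

lemma Phi_neg: assumes h: "h \<noteq> 0" and g: "f v h \<noteq> 0"
  shows "Phi f h v (- v) \<in> boundaries2 f (H1 f)"
proof -
  have v: "v \<noteq> 0" using g by auto
  have "smul (of_int (f (- v) h)) (Phi f h v v) + smul (of_int (f h v)) (Phi f h v (- v))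
       + smul (of_int (f v (- v))) (Phi f h v h) \<in> boundaries2 f (H1 f)"
    using RPhi[of v "- v" h h v] v h by simp
  then have "smul (of_int (f h v)) (Phi f h v (- v)) \<in> boundaries2 f (H1 f)" by simp
  then have "smul (1 / of_int (f h v)) (smul (of_int (f h v)) (Phi f h v (- v))) \<in> boundaries2 f (H1 f)"
    by (rule B_smul)
  moreover have "f h v \<noteq> 0" using g fanti[of h v] by simp
  ultimately show ?thesis by (simp add: smul_def)
qed

lemma NE: assumes h: "h \<noteq> 0" and g: "f v h \<noteq> 0" and y0: "y \<noteq> 0" and yh: "y \<noteq> h"
  and ex: "2 * f v y \<noteq> f v h"
  shows "Phi f h v y \<in> boundaries2 f (H1 f)"
proof -
  consider "y = h - v" | "y = - v" | "y \<noteq> h - v" "y \<noteq> - v" by blast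
  then show ?thesis
  proof cases
    case 1 then show ?thesis using Phi_anti[of h v v] B_zero by simp
  next
    case 2 then show ?thesis using Phi_neg[OF h g] by simp
  next
    case 3
    have v: "v \<noteq> 0" using g by auto
    define m where "m = f v y"
    define gv where "gv = f v h"
    let ?P = "Phi f h v y" and ?Q = "Phi f h v (v + y)" and ?R = "Phi f h v (- v)"
    have z1: "h - (v + y) \<noteq> 0" using 3 by (auto simp: algebra_simps)
    have T0: "smul (of_int (f y (h - (v + y)))) (Phi f h v v) + smul (of_int (f (h - (v + y)) v)) ?P
       + smul (of_int (f v y)) (Phi f h v (h - (v + y))) \<in> boundaries2 f (H1 f)"
      by (rule RPhi) (use v y0 z1 in auto)
    have c1: "f (h - (v + y)) v = m - gv" unfolding m_def gv_def by (simp add: fanti[of h v] fanti[of y v])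
    have T: "smul (of_int (m - gv)) ?P - smul (of_int m) ?Q \<in> boundaries2 f (H1 f)"
      using T0 unfolding c1 Phi_anti m_def[symmetric] by (simp add: smul_neg smul_uminus)
    have z2: "v + y \<noteq> 0" using 3 by (auto simp: add_eq_0_iff)
    have z3: "h - y \<noteq> 0" using yh by simp
    have T1: "smul (of_int (f (v + y) (h - y))) ?R + smul (of_int (f (h - y) (- v))) ?Q
       + smul (of_int (f (- v) (v + y))) (Phi f h v (h - y)) \<in> boundaries2 f (H1 f)"
      by (rule RPhi) (use v z2 z3 in auto)
    have c2: "f (h - y) (- v) = gv - m" unfolding m_def gv_def by (simp add: fanti[of h v] fanti[of y v])
    have c3: "f (- v) (v + y) = - m" unfolding m_def by simp
    have T2: "smul (of_int (f (v + y) (h - y))) ?R + (smul (of_int (gv - m)) ?Q + smul (of_int m) ?P)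
       \<in> boundaries2 f (H1 f)"
      using T1 unfolding c2 c3 Phi_anti by (simp add: smul_neg smul_uminus algebra_simps)
    have T3: "smul (of_int (gv - m)) ?Q + smul (of_int m) ?P \<in> boundaries2 f (H1 f)"
    proof -
      have "smul (of_int (f (v + y) (h - y))) ?R \<in> boundaries2 f (H1 f)"
        by (rule B_smul, rule Phi_neg[OF h g])
      from B_diff[OF T2 this] show ?thesis by simp
    qed
    have comb: "smul (of_int (gv - m)) (smul (of_int (m - gv)) ?P - smul (of_int m) ?Q)
        + smul (of_int m) (smul (of_int (gv - m)) ?Q + smul (of_int m) ?P)
        = smul (of_int (gv * (2 * m - gv))) ?P"
      by (simp add: fun_eq_iff algebra_simps)
    have "smul (of_int (gv * (2 * m - gv))) ?P \<in> boundaries2 f (H1 f)"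
      unfolding comb[symmetric] by (intro B_add B_smul T T3)
    then have "smul (1 / of_int (gv * (2 * m - gv))) (smul (of_int (gv * (2 * m - gv))) ?P) \<in> boundaries2 f (H1 f)"
      by (rule B_smul)
    moreover have "gv * (2 * m - gv) \<noteq> 0" using g ex unfolding m_def gv_def by simp
    ultimately show ?thesis by (simp add: smul_def)
  qed
qed


lemma ALLh: assumes h: "h \<noteq> 0" and g: "f u h \<noteq> 0" and y0: "y \<noteq> 0" and yh: "y \<noteq> h"
  shows "Phi f h u y \<in> boundaries2 f (H1 f)"
proof -
  consider "2 * f u y \<noteq> f u h" | "2 * f u y = f u h" "y + y = h" | "2 * f u y = f u h" "y + y \<noteq> h" by blast
  then show ?thesis
  proof cases
    case 1 then show ?thesis by (rule NE[OF h g y0 yh])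
  next
    case 2
    have "h - y = y" using 2(2) by (auto simp: algebra_simps)
    then have "bb h y = 0" by (simp add: bb_def)
    moreover have "gg f h y = 0" unfolding gg_def using 2(2)[symmetric] by simp
    ultimately have "Phi f h u y = 0" by (simp add: Phi_def fun_eq_iff)
    then show ?thesis using B_zero by simp
  next
    case 3
    let ?q = "y + y - h"
    have q: "?q \<noteq> 0" using 3(2) by (auto simp: algebra_simps)
    obtain z where z: "f h z \<noteq> 0" "f ?q z \<noteq> 0" using exists3[OF h q h] by blast
    have zh: "f z h \<noteq> 0" using z(1) fanti[of z h] by simp
    have zq: "f z ?q \<noteq> 0" using z(2) fanti[of z ?q] by simp
    obtain w where w1: "f w h \<noteq> 0" and w2: "2 * f u w \<noteq> f u h" and w3: "f w ?q \<noteq> 0"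
    proof (cases "2 * f u z \<noteq> f u h")
      case True then show ?thesis using that zh zq by blast
    next
      case False
      have "f (z + z) h \<noteq> 0" using zh by simp
      moreover have "2 * f u (z + z) \<noteq> f u h" using False g by simp
      moreover have "f (z + z) ?q \<noteq> 0" using zq by (simp only: bl)
      ultimately show ?thesis using that by blast
    qed
    have w0: "w \<noteq> 0" using w1 by auto
    have wh: "w \<noteq> h" using w1 by auto
    have Puw: "Phi f h u w \<in> boundaries2 f (H1 f)" by (rule NE[OF h g w0 wh w2])
    have "2 * f w y \<noteq> f w h" using w3 by simp
    then have Pwy: "Phi f h w y \<in> boundaries2 f (H1 f)" by (rule NE[OF h w1 y0 yh])
    have id: "smul (gg f h w) (Phi f h u y) = smul (gg f h u) (Phi f h w y) + smul (gg f h y) (Phi f h u w)"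
      by (simp add: Phi_def fun_eq_iff algebra_simps)
    have "smul (gg f h w) (Phi f h u y) \<in> boundaries2 f (H1 f)"
      unfolding id by (intro B_add B_smul Pwy Puw)
    then have "smul (1 / gg f h w) (smul (gg f h w) (Phi f h u y)) \<in> boundaries2 f (H1 f)"
      by (rule B_smul)
    moreover have "gg f h w \<noteq> 0" using w1 by (simp add: gg_def)
    ultimately show ?thesis by (simp add: smul_def)
  qed
qed


lemma bvec_swap: "bvec (snd p, fst p) q = bvec p (snd q, fst q)"
  by (cases p, cases q) (auto simp: bvec_def)

lemma sum_smul_const: "(\<Sum>p\<in>A. smul (c p) V) = smul (\<Sum>p\<in>A. c p) V"
  by (simp add: fun_eq_iff sum_fun_apply sum_distrib_right)

lemma psi_phi: fixes w :: "'a \<times> 'a \<Rightarrow> rat" assumes "w \<in> chains2 S"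
  shows "psi (phi w) = (\<lambda>q. if fst q + snd q = 0 then w q else 0)"
proof (rule ext)
  fix q :: "'a \<times> 'a"
  obtain a b where q: "q = (a, b)" by (cases q) auto
  show "psi (phi w) q = (if fst q + snd q = 0 then w q else 0)"
  proof (cases "a + b = 0")
    case True
    then have b: "b = - a" by (simp add: add_eq_0_iff)
    have "w (- a, a) = - w (a, - a)" using chains2_alt[OF assms, of "-a" a] by simp
    then show ?thesis unfolding q b psi_def phi_def by simp
  next
    case False then show ?thesis unfolding q psi_def by simp
  qed
qed

lemma part2_inj: assumes w: "w \<in> cycles2 f (H1 f)" and pw: "phi w \<in> tensor_rel"
  shows "w \<in> boundaries2 f (H1 f)"
proof -
  have wc: "w \<in> chains2 (H1 f)" and dw: "d2 f w = 0" using w unfolding cycles2_def by auto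
  have fin: "finite (supp w)" by (rule chains2_fin[OF wc])
  define w0 where "w0 = (\<lambda>q. if fst q + snd q = 0 then w q else 0)"
  have B0: "w0 \<in> boundaries2 f (H1 f)"
    using psi_TR[OF pw] psi_phi[OF wc] unfolding w0_def by simp
  define P1 where "P1 = {p \<in> supp w. fst p + snd p \<noteq> 0}"
  have finP: "finite P1" using fin unfolding P1_def by simp
  have P1_sub: "fst p \<noteq> 0 \<and> snd p \<noteq> 0" if "p \<in> P1" for p
    using that chains2_supp[OF wc] unfolding P1_def by auto
  have w1eq: "w - w0 = (\<Sum>p\<in>P1. smul (w p / 2) (wedge2 (fst p) (snd p)))"
  proof (rule ext)
    fix q :: "'a \<times> 'a"
    have sw: "(snd q, fst q) \<in> P1 \<longleftrightarrow> q \<in> P1"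
    proof -
      have "w (snd q, fst q) = - w q" using chains2_alt[OF wc, of "snd q" "fst q"] by simp
      then show ?thesis unfolding P1_def supp_def by (auto simp: add.commute)
    qed
    have ws: "w (snd q, fst q) = - w q" using chains2_alt[OF wc, of "snd q" "fst q"] by simp
    have "(\<Sum>p\<in>P1. smul (w p / 2) (wedge2 (fst p) (snd p))) q
        = (\<Sum>p\<in>P1. w p / 2 * bvec p q) - (\<Sum>p\<in>P1. w p / 2 * bvec p (snd q, fst q))"
      by (simp add: sum_fun_apply wedge2_def bvec_swap algebra_simps sum_subtractf)
    also have "\<dots> = (if q \<in> P1 then w q else 0)"
      unfolding sum_bvec[OF finP] sw ws by simp
    also have "\<dots> = (w - w0) q"
      unfolding P1_def w0_def supp_def by auto
    finally show "(w - w0) q = (\<Sum>p\<in>P1. smul (w p / 2) (wedge2 (fst p) (snd p))) q" by simp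
  qed
  define U where "U h = (SOME u. f u h \<noteq> 0)" for h
  have U: "f (U h) h \<noteq> 0" if "h \<noteq> 0" for h
    unfolding U_def by (rule someI_ex, rule ex_nz[OF that])
  let ?s = "\<lambda>p. fst p + snd p"
  define V where "V h = smul (1 / (2 * gg f h (U h))) (bb h (U h))" for h
  have trm: "smul (w p / 2) (wedge2 (fst p) (snd p))
      = smul (w p / 2 / gg f (?s p) (U (?s p))) (Phi f (?s p) (U (?s p)) (fst p))
        + smul (w p * gg f (?s p) (fst p)) (V (?s p))" if p: "p \<in> P1" for p
  proof -
    have h: "?s p \<noteq> 0" using p unfolding P1_def by simp
    have gU: "gg f (?s p) (U (?s p)) \<noteq> 0" using U[OF h] by (simp add: gg_def)
    have "wedge2 (fst p) (snd p) = bb (?s p) (fst p)" by (simp add: bb_def)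
    then show ?thesis using gU unfolding V_def Phi_def by (simp add: fun_eq_iff field_simps)
  qed
  have w1s: "w - w0 = (\<Sum>p\<in>P1. smul (w p / 2 / gg f (?s p) (U (?s p))) (Phi f (?s p) (U (?s p)) (fst p)))
      + (\<Sum>p\<in>P1. smul (w p * gg f (?s p) (fst p)) (V (?s p)))"
    unfolding w1eq sum.distrib[symmetric] by (rule sum.cong) (simp_all add: trm)
  have BP: "(\<Sum>p\<in>P1. smul (w p / 2 / gg f (?s p) (U (?s p))) (Phi f (?s p) (U (?s p)) (fst p)))
      \<in> boundaries2 f (H1 f)"
  proof (rule B_sum[OF finP], rule B_smul)
    fix p assume p: "p \<in> P1"
    have h: "?s p \<noteq> 0" using p unfolding P1_def by simp
    have a0: "fst p \<noteq> 0" using P1_sub[OF p] by simp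
    have ah: "fst p \<noteq> ?s p" using P1_sub[OF p] by simp
    show "Phi f (?s p) (U (?s p)) (fst p) \<in> boundaries2 f (H1 f)"
      by (rule ALLh[OF h U[OF h] a0 ah])
  qed
  have inner: "(\<Sum>p\<in>{p \<in> P1. ?s p = h}. w p * gg f h (fst p)) = 0" if h: "h \<in> ?s ` P1" for h
  proof -
    have h0: "h \<noteq> 0" using h unfolding P1_def by auto
    have "d2 f w h = 0" using dw by simp
    then have "(\<Sum>p\<in>supp w. w p * (- of_int (f (fst p) (snd p)) * bvec (?s p) h)) = 0"
      unfolding d2_def by simp
    moreover have "(\<Sum>p\<in>supp w. w p * (- of_int (f (fst p) (snd p)) * bvec (?s p) h))
        = - (\<Sum>p\<in>{p \<in> supp w. ?s p = h}. w p * of_int (f (fst p) (snd p)))"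
      unfolding sum.inter_filter[OF fin] sum_negf[symmetric]
      by (rule sum.cong) (auto simp: bvec_def)
    moreover have "{p \<in> supp w. ?s p = h} = {p \<in> P1. ?s p = h}" unfolding P1_def using h0 by auto
    moreover have "(\<Sum>p\<in>{p \<in> P1. ?s p = h}. w p * of_int (f (fst p) (snd p)))
        = (\<Sum>p\<in>{p \<in> P1. ?s p = h}. w p * gg f h (fst p))"
    proof (rule sum.cong)
      fix p assume "p \<in> {p \<in> P1. ?s p = h}"
      then have "snd p = h - fst p" by (auto simp: algebra_simps)
      then show "w p * of_int (f (fst p) (snd p)) = w p * gg f h (fst p)" by (simp add: gg_def)
    qed simp
    ultimately show ?thesis by simp
  qed
  have N0: "(\<Sum>p\<in>P1. smul (w p * gg f (?s p) (fst p)) (V (?s p))) = 0"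
  proof -
    have "(\<Sum>p\<in>P1. smul (w p * gg f (?s p) (fst p)) (V (?s p)))
        = (\<Sum>h\<in>?s ` P1. \<Sum>p\<in>{p \<in> P1. ?s p = h}. smul (w p * gg f (?s p) (fst p)) (V (?s p)))"
      by (rule sum.group[symmetric]) (use finP in auto)
    also have "\<dots> = (\<Sum>h\<in>?s ` P1. \<Sum>p\<in>{p \<in> P1. ?s p = h}. smul (w p * gg f h (fst p)) (V h))"
      by (rule sum.cong, simp, rule sum.cong) auto
    also have "\<dots> = (\<Sum>h\<in>?s ` P1. smul (\<Sum>p\<in>{p \<in> P1. ?s p = h}. w p * gg f h (fst p)) (V h))"
      by (simp add: sum_smul_const)
    also have "\<dots> = 0" by (rule sum.neutral) (simp add: inner)
    finally show ?thesis .
  qed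
  have "w - w0 \<in> boundaries2 f (H1 f)" using BP unfolding w1s N0 by simp
  then have "w0 + (w - w0) \<in> boundaries2 f (H1 f)" using B0 by (rule B_add[rotated])
  then show ?thesis by simp
qed

lemma part2: "induces_iso phi (cycles2 f (H1 f)) (boundaries2 f (H1 f)) (QS UNIV) tensor_rel"
  unfolding induces_iso_def
proof (intro conjI ballI allI impI)
  fix x assume "x \<in> cycles2 f (H1 f)"
  then show "phi x \<in> QS UNIV" unfolding cycles2_def using phi_QS by blast
next
  fix x assume "x \<in> boundaries2 f (H1 f)"
  then show "phi x \<in> tensor_rel" by (rule phi_B)
next
  fix x y :: "'a \<times> 'a \<Rightarrow> rat"
  show "phi (x + y) = phi x + phi y" by (rule phi_add)
next
  fix x :: "'a \<times> 'a \<Rightarrow> rat" and c :: rat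
  show "phi (\<lambda>t. c * x t) = (\<lambda>t. c * phi x t)" by (simp add: phi_def)
next
  fix x assume "x \<in> cycles2 f (H1 f)" "phi x \<in> tensor_rel"
  then show "x \<in> boundaries2 f (H1 f)" by (rule part2_inj)
next
  fix y :: "'a \<Rightarrow> rat" assume y: "y \<in> QS UNIV"
  show "\<exists>x\<in>cycles2 f (H1 f). y - phi x \<in> tensor_rel"
    using psi_cyc[OF y] psi_surj[OF y] by blast
qed

end

theorem corollary4p2:
  fixes f :: "'a::ab_group_add \<Rightarrow> 'a \<Rightarrow> int"
  assumes bilin_l: "\<forall>x y z. f (x + y) z = f x z + f y z"
    and bilin_r: "\<forall>x y z. f x (y + z) = f x y + f x z"
    and alt: "\<forall>x. f x x = 0"
    and nondeg: "\<forall>x. (\<forall>y. f x y = 0) \<longrightarrow> x = 0"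
  shows "induces_iso (proj2 (H1 f)) (cycles2 f UNIV) (boundaries2 f UNIV)
           (cycles2 f (H1 f)) (boundaries2 f (H1 f))
       \<and> (\<exists>\<phi> :: ('a \<times> 'a \<Rightarrow> rat) \<Rightarrow> ('a \<Rightarrow> rat). induces_iso \<phi> (cycles2 f (H1 f)) (boundaries2 f (H1 f))
                 (QS UNIV) tensor_rel)"
proof -
  interpret af f
    by unfold_locales (use bilin_l bilin_r alt nondeg in blast)+
  show ?thesis using part1 part2 by blast
qed

end
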